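(* Let $0 \leq a \leq b \leq 1$ and $r \in (0,3)$. For any $u \geq r$ and $t \geq \frac{1}{200}$, \[ g_t'(u) = O\!\left(r^{-\frac23}\exp\!\Big(-t^2\delta_b^2 - \tfrac{7}{32}u^{\frac43}t^{-\frac23} + \tfrac{3}{16}u^{\frac23}t^{\frac23}\Big)\right), \] where $\delta_b = \max(\frac14 - b, 0)$.
   Context: For $0\le a\le b$ and $t>0$, let $f_t(\lambda) = \frac{t}{\sqrt\pi}\int_a^b\exp(-t^2(\lambda-\mu)^2)\,d\mu$, let $h_t(r) = f_t(\frac14 + r^2)$ for $r\in\mathbb{C}$, and let $g_t(u) = \frac{1}{2\pi}\int_{-\infty}^{+\infty}h_t(r)e^{iru}\,dr$ be its inverse Fourier transform. $T_1 = O(T_2)$ means $|T_1|\le CT_2$ with a universal constant $C$ independent of $a,b,r,u,t$. *)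

theory Defs
  imports "HOL-Analysis.Analysis"
begin

definition f_t :: "real \<Rightarrow> real \<Rightarrow> real \<Rightarrow> complex \<Rightarrow> complex" where
  "f_t a b t lam = complex_of_real (t / sqrt pi) *
     integral {a..b} (\<lambda>\<mu>::real. exp (- (complex_of_real t)\<^sup>2 * (lam - complex_of_real \<mu>)\<^sup>2))"

definition h_t :: "real \<Rightarrow> real \<Rightarrow> real \<Rightarrow> complex \<Rightarrow> complex" where
  "h_t a b t r = f_t a b t (1/4 + r\<^sup>2)"

definition g_t :: "real \<Rightarrow> real \<Rightarrow> real \<Rightarrow> real \<Rightarrow> complex" where
  "g_t a b t u = complex_of_real (1 / (2 * pi)) *
     integral UNIV (\<lambda>r::real. h_t a b t (complex_of_real r) * exp (\<i> * complex_of_real (r * u)))"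

definition delta_b :: "real \<Rightarrow> real" where
  "delta_b b = max (1/4 - b) 0"

end

theory Submission
  imports Defs "HOL-Complex_Analysis.Complex_Analysis" "HOL-Probability.Distributions" "HOL-Probability.Characteristic_Functions" "HOL-Real_Asymp.Real_Asymp"
begin

definition KK :: "real \<Rightarrow> complex \<Rightarrow> real \<Rightarrow> complex" where
  "KK t z \<mu> = exp (- (complex_of_real t)\<^sup>2 * ((1/4 + z\<^sup>2) - complex_of_real \<mu>)\<^sup>2)"

definition qq :: "real \<Rightarrow> real \<Rightarrow> real \<Rightarrow> real" where
  "qq x y \<mu> = (1/4 - \<mu> + x\<^sup>2 - y\<^sup>2)\<^sup>2 - 4 * x\<^sup>2 * y\<^sup>2"

lemma h_t_eq: "h_t a b t z = complex_of_real (t / sqrt pi) * integral {a..b} (KK t z)"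
  by (simp add: h_t_def f_t_def KK_def[abs_def])

lemma norm_KK: "norm (KK t (complex_of_real x + \<i> * complex_of_real y) \<mu>) = exp (- (t\<^sup>2 * qq x y \<mu>))"
proof -
  have "Re (- (complex_of_real t)\<^sup>2 * ((1/4 + (complex_of_real x + \<i> * complex_of_real y)\<^sup>2) - complex_of_real \<mu>)\<^sup>2)
        = - (t\<^sup>2 * qq x y \<mu>)"
    by (simp add: qq_def power2_eq_square algebra_simps)
  then show ?thesis by (simp add: KK_def)
qed

lemma qq_lower: assumes "\<mu> \<le> 1"
  shows "qq x y \<mu> \<ge> 2 * x\<^sup>2 - ((2*y\<^sup>2+1)\<^sup>2 + 2*(2*y\<^sup>2+1)*(y\<^sup>2+3/4))"
proof -
  define S where "S = 1/4 - \<mu> + x\<^sup>2 - y\<^sup>2"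
  define K where "K = 2*y\<^sup>2+1"
  have "S\<^sup>2 \<ge> 2*K*S - K\<^sup>2" using zero_le_power2[of "S-K"] by (simp add: power2_eq_square algebra_simps)
  moreover have "2*K*S - K\<^sup>2 - 4*x\<^sup>2*y\<^sup>2 = 2*x\<^sup>2 - (K\<^sup>2 + 2*K*(y\<^sup>2+3/4)) + 2*K*(1-\<mu>)"
    by (simp add: S_def K_def algebra_simps power2_eq_square)
  moreover have "2*K*(1-\<mu>) \<ge> 0" using assms by (simp add: K_def)
  moreover have "qq x y \<mu> = S\<^sup>2 - 4*x\<^sup>2*y\<^sup>2" by (simp add: qq_def S_def)
  ultimately show ?thesis unfolding K_def by linarith
qed

lemma qq_ident: "qq x y \<mu> = (x\<^sup>2 - (3*y\<^sup>2 - (1/4-\<mu>)))\<^sup>2 - 8*y^4 + 4*(1/4-\<mu>)*y\<^sup>2"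
  by (simp add: qq_def power2_eq_square power4_eq_xxxx algebra_simps)

lemma KK_deriv: "((\<lambda>z. KK t z \<mu>) has_field_derivative
   (KK t z \<mu> * (-(complex_of_real t)\<^sup>2 * (2 * ((1/4+z\<^sup>2) - complex_of_real \<mu>) * (2*z))))) (at z within U)"
  unfolding KK_def
  by (auto intro!: derivative_eq_intros simp: algebra_simps power2_eq_square)

lemma KK_cont: "continuous_on S (\<lambda>(z, \<mu>). KK t z \<mu>)"
  unfolding KK_def case_prod_unfold by (intro continuous_intros)

lemma KK_integrable: "KK t z integrable_on {a..b}"
proof -
  have "continuous_on {a..b} (KK t z)" unfolding KK_def by (intro continuous_intros)
  then show ?thesis by (rule integrable_continuous_interval)
qed

lemma h_holo: "h_t a b t holomorphic_on UNIV"
proof -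
  have "(\<lambda>z. integral (cbox a b) (KK t z)) holomorphic_on UNIV"
  proof (rule leibniz_rule_holomorphic[OF KK_deriv])
    show "KK t z integrable_on cbox a b" for z using KK_integrable by simp
    show "continuous_on (UNIV \<times> cbox a b) (\<lambda>(z, \<mu>). KK t z \<mu> * (-(complex_of_real t)\<^sup>2 * (2 * ((1/4+z\<^sup>2) - complex_of_real \<mu>) * (2*z))))"
      unfolding KK_def case_prod_unfold by (intro continuous_intros)
  qed auto
  then show ?thesis unfolding h_t_eq[abs_def] by (auto intro!: holomorphic_intros)
qed

lemma int_dom:
  fixes f :: "real \<Rightarrow> complex"
  assumes "continuous_on UNIV f" "\<And>x. norm (f x) \<le> g x" "g integrable_on UNIV"
  shows "f integrable_on UNIV"
proof (rule integrable_on_all_intervals_integrable_bound[OF _ _ assms(3)])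
  show "(\<lambda>x. if x \<in> UNIV then f x else 0) integrable_on cbox a b" for a b
    using integrable_continuous[OF continuous_on_subset[OF assms(1)]] by simp
qed (use assms in auto)

lemma exp_i_diff: "norm (exp (\<i> * complex_of_real \<alpha>) - exp (\<i> * complex_of_real \<beta>)) \<le> \<bar>\<alpha> - \<beta>\<bar>"
proof -
  have "exp (\<i> * complex_of_real \<alpha>) - exp (\<i> * complex_of_real \<beta>) =
        exp (\<i> * complex_of_real \<beta>) * (exp (\<i> * complex_of_real (\<alpha> - \<beta>)) - 1)"
    by (simp add: algebra_simps flip: exp_add)
  moreover have "cmod (exp (\<i> * complex_of_real (\<alpha> - \<beta>)) - 1) \<le> \<bar>\<alpha> - \<beta>\<bar>"
    using iexp_approx1[of "\<alpha> - \<beta>" 0] by simp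
  ultimately show ?thesis by (simp add: norm_mult)
qed

lemma of_real_at0: "filterlim complex_of_real (at 0) (at (0::real))"
proof (rule filterlim_atI)
  show "((\<lambda>x. complex_of_real x) \<longlongrightarrow> 0) (at 0)"
    by (rule tendsto_eq_intros) (auto intro!: tendsto_ident_at)
  show "\<forall>\<^sub>F x in at 0. complex_of_real x \<noteq> 0"
    by (auto simp: eventually_at_filter)
qed

lemma deriv_under:
  fixes H :: "real \<Rightarrow> complex" and w :: "real \<Rightarrow> real"
  assumes cH: "continuous_on UNIV H"
    and bH: "\<And>r. norm (H r) \<le> w r" and bH1: "\<And>r. \<bar>r\<bar> * norm (H r) \<le> w r"
    and wi: "w integrable_on UNIV"
  shows "((\<lambda>v. integral UNIV (\<lambda>r. H r * exp (\<i> * complex_of_real (r * v)))) has_vector_derivative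
          integral UNIV (\<lambda>r. H r * (\<i> * complex_of_real r) * exp (\<i> * complex_of_real (r * u)))) (at u)"
proof -
  define G where "G v = integral UNIV (\<lambda>r. H r * exp (\<i> * complex_of_real (r * v)))" for v
  define D where "D = integral UNIV (\<lambda>r. H r * (\<i> * complex_of_real r) * exp (\<i> * complex_of_real (r * u)))"
  have int1: "(\<lambda>r. H r * exp (\<i> * complex_of_real (r * v))) integrable_on UNIV" for v
  proof (rule int_dom[OF _ _ wi])
    show "continuous_on UNIV (\<lambda>r. H r * exp (\<i> * complex_of_real (r * v)))"
      by (intro continuous_intros cH)
    show "cmod (H r * exp (\<i> * complex_of_real (r * v))) \<le> w r" for r
      using bH[of r] by (simp add: norm_mult)
  qed
  have int2: "(\<lambda>r. H r * (\<i> * complex_of_real r) * exp (\<i> * complex_of_real (r * u))) integrable_on UNIV"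
  proof (rule int_dom[OF _ _ wi])
    show "continuous_on UNIV (\<lambda>r. H r * (\<i> * complex_of_real r) * exp (\<i> * complex_of_real (r * u)))"
      by (intro continuous_intros cH)
    show "cmod (H r * (\<i> * complex_of_real r) * exp (\<i> * complex_of_real (r * u))) \<le> w r" for r
      using bH1[of r] by (simp add: norm_mult mult.commute)
  qed
  define Q where "Q k r = H r * ((exp (\<i> * complex_of_real (r * (u + k))) - exp (\<i> * complex_of_real (r * u))) / complex_of_real k
                  - (\<i> * complex_of_real r) * exp (\<i> * complex_of_real (r * u)))" for k r
  have hasQ: "(Q k has_integral ((G (u + k) - G u) / complex_of_real k - D)) UNIV" for k
  proof -
    have "((\<lambda>r. (H r * exp (\<i> * complex_of_real (r * (u+k))) - H r * exp (\<i> * complex_of_real (r * u))) / complex_of_real k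
           - H r * (\<i> * complex_of_real r) * exp (\<i> * complex_of_real (r * u))) has_integral ((G (u + k) - G u) / complex_of_real k - D)) UNIV"
      unfolding G_def D_def by (intro has_integral_diff has_integral_divide integrable_integral int1 int2)
    then show ?thesis unfolding Q_def by (simp add: algebra_simps diff_divide_distrib)
  qed
  have intQ: "Q k integrable_on UNIV" for k using hasQ by blast
  have IQ: "integral UNIV (Q k) = (G (u + k) - G u) / complex_of_real k - D" for k
    using hasQ by (rule integral_unique)
  have Qbound: "norm (Q k r) \<le> 2 * w r" if "k \<noteq> 0" for k r
  proof -
    have "norm ((exp (\<i> * complex_of_real (r * (u + k))) - exp (\<i> * complex_of_real (r * u))) / complex_of_real k)
           \<le> \<bar>r\<bar>"
    proof -
      have "norm (exp (\<i> * complex_of_real (r * (u + k))) - exp (\<i> * complex_of_real (r * u))) \<le> \<bar>r\<bar> * \<bar>k\<bar>"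
        using exp_i_diff[of "r * (u + k)" "r * u"] by (simp add: algebra_simps abs_mult)
      then show ?thesis using that by (simp add: norm_divide divide_le_eq)
    qed
    then have "norm ((exp (\<i> * complex_of_real (r * (u + k))) - exp (\<i> * complex_of_real (r * u))) / complex_of_real k
                  - (\<i> * complex_of_real r) * exp (\<i> * complex_of_real (r * u))) \<le> 2 * \<bar>r\<bar>"
      using norm_triangle_ineq4[of "(exp (\<i> * complex_of_real (r * (u + k))) - exp (\<i> * complex_of_real (r * u))) / complex_of_real k"
         "(\<i> * complex_of_real r) * exp (\<i> * complex_of_real (r * u))"]
      by (simp add: norm_mult)
    then have "norm (Q k r) \<le> norm (H r) * (2 * \<bar>r\<bar>)"
      unfolding Q_def norm_mult by (intro mult_left_mono) auto
    then show ?thesis using bH1[of r] by (simp add: algebra_simps)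
  qed
  have Qlim: "((\<lambda>k. Q k r) \<longlongrightarrow> 0) (at 0)" for r
  proof -
    have d: "((\<lambda>z. exp (\<i> * complex_of_real r * (complex_of_real u + z))) has_field_derivative
              (\<i> * complex_of_real r) * exp (\<i> * complex_of_real r * (complex_of_real u + 0))) (at 0)"
      by (auto intro!: derivative_eq_intros)
    then have L: "((\<lambda>z. (exp (\<i> * complex_of_real r * (complex_of_real u + z)) - exp (\<i> * complex_of_real r * complex_of_real u)) / z)
               \<longlongrightarrow> (\<i> * complex_of_real r) * exp (\<i> * complex_of_real r * complex_of_real u)) (at 0)"
      by (simp add: DERIV_def)
    have "((\<lambda>k. (exp (\<i> * complex_of_real r * (complex_of_real u + complex_of_real k)) - exp (\<i> * complex_of_real r * complex_of_real u)) / complex_of_real k)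
               \<longlongrightarrow> (\<i> * complex_of_real r) * exp (\<i> * complex_of_real r * complex_of_real u)) (at 0)"
      using filterlim_compose[OF L of_real_at0] by simp
    then have M: "((\<lambda>k. (exp (\<i> * complex_of_real (r * (u + k))) - exp (\<i> * complex_of_real (r * u))) / complex_of_real k)
        \<longlongrightarrow> (\<i> * complex_of_real r) * exp (\<i> * complex_of_real (r * u))) (at 0)"
      by (simp add: algebra_simps)
    have "((\<lambda>k. Q k r) \<longlongrightarrow> H r * ((\<i> * complex_of_real r) * exp (\<i> * complex_of_real (r * u)) - (\<i> * complex_of_real r) * exp (\<i> * complex_of_real (r * u)))) (at 0)"
      unfolding Q_def by (intro tendsto_intros M)
    then show ?thesis by simp
  qed
  have limI: "((\<lambda>k. integral UNIV (Q k)) \<longlongrightarrow> 0) (at 0)"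
    unfolding tendsto_at_iff_sequentially
  proof (intro allI impI)
    fix X :: "nat \<Rightarrow> real" assume X0: "\<forall>i. X i \<in> UNIV - {0}" and XL: "X \<longlonglongrightarrow> 0"
    have FX: "filterlim X (at 0) sequentially"
      using X0 XL by (intro filterlim_atI) auto
    have p1: "\<And>n. Q (X n) integrable_on UNIV" by (rule intQ)
    have p2: "(\<lambda>r. 2 * w r) integrable_on UNIV" using wi by simp
    have p3: "\<And>n r. r \<in> UNIV \<Longrightarrow> norm (Q (X n) r) \<le> 2 * w r" using X0 Qbound by auto
    have p4: "\<And>r. r \<in> UNIV \<Longrightarrow> (\<lambda>n. Q (X n) r) \<longlonglongrightarrow> 0"
      using filterlim_compose[OF Qlim FX] by blast
    have "(\<lambda>n. integral UNIV (Q (X n))) \<longlonglongrightarrow> 0"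
      using Equivalence_Lebesgue_Henstock_Integration.dominated_convergence(2)[OF p1 p2 p3 p4] by simp
    then show "((\<lambda>k. integral UNIV (Q k)) \<circ> X) \<longlonglongrightarrow> 0" by (simp add: o_def)
  qed
  have eq: "\<forall>\<^sub>F k in at 0. norm (integral UNIV (Q k)) = norm (G (u + k) - G u - k *\<^sub>R D) / norm k"
  proof (rule eventually_mono[OF eventually_neq_at_within[of 0 0 UNIV]])
    fix k :: real assume k: "k \<noteq> 0"
    have "G (u + k) - G u - k *\<^sub>R D = complex_of_real k * ((G (u + k) - G u) / complex_of_real k - D)"
      using k by (simp add: scaleR_conv_of_real field_simps)
    then show "norm (integral UNIV (Q k)) = norm (G (u + k) - G u - k *\<^sub>R D) / norm k"
      using k by (simp add: IQ norm_mult)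
  qed
  have "((\<lambda>k. norm (G (u + k) - G u - k *\<^sub>R D) / norm k) \<longlongrightarrow> 0) (at 0)"
    using tendsto_cong[OF eq] limI tendsto_norm_zero by blast
  then have "(G has_derivative (\<lambda>k. k *\<^sub>R D)) (at u)"
    unfolding has_derivative_at by (auto intro: bounded_linear_scaleR_left)
  then show ?thesis unfolding has_vector_derivative_def G_def D_def .
qed

definition Mf :: "real \<Rightarrow> real" where
  "Mf y = (2*y\<^sup>2+1)\<^sup>2 + 2*(2*y\<^sup>2+1)*(y\<^sup>2+3/4)"

lemma KK_cont_on: "continuous_on S (KK t z)"
  unfolding KK_def by (intro continuous_intros)

lemma norm_h_int:
  assumes "0 \<le> t"
  shows "norm (h_t a b t z) \<le> t / sqrt pi * integral {a..b} (\<lambda>\<mu>. norm (KK t z \<mu>))"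
proof -
  have "norm (integral {a..b} (KK t z)) \<le> integral {a..b} (\<lambda>\<mu>. norm (KK t z \<mu>))"
    by (rule integral_norm_bound_integral)
       (auto intro!: integrable_continuous_interval continuous_intros KK_cont_on)
  moreover have "norm (h_t a b t z) = t / sqrt pi * norm (integral {a..b} (KK t z))"
    using assms by (simp add: h_t_eq norm_mult norm_divide)
  ultimately show ?thesis using assms by (auto intro!: mult_left_mono divide_right_mono)
qed

lemma norm_h_bound:
  assumes "0 \<le> a" "a \<le> b" "b \<le> 1" "0 \<le> t"
  shows "norm (h_t a b t (complex_of_real x + \<i> * complex_of_real y))
           \<le> t / sqrt pi * (exp (t\<^sup>2 * Mf y) * exp (- 2 * t\<^sup>2 * x\<^sup>2))"
proof -
  define B where "B = exp (t\<^sup>2 * Mf y) * exp (- 2 * t\<^sup>2 * x\<^sup>2)"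
  have "norm (KK t (complex_of_real x + \<i> * complex_of_real y) \<mu>) \<le> B" if "\<mu> \<in> {a..b}" for \<mu>
  proof -
    have "qq x y \<mu> \<ge> 2 * x\<^sup>2 - Mf y" using qq_lower[of \<mu> x y] that assms by (simp add: Mf_def)
    then have "t\<^sup>2 * qq x y \<mu> \<ge> t\<^sup>2 * (2 * x\<^sup>2 - Mf y)" by (intro mult_left_mono) auto
    then show ?thesis unfolding norm_KK B_def by (simp add: algebra_simps flip: exp_add)
  qed
  then have "norm (integral {a..b} (KK t (complex_of_real x + \<i> * complex_of_real y))) \<le> B * (b - a)"
    using assms by (intro integral_bound KK_cont_on) auto
  also have "\<dots> \<le> B" using assms by (simp add: B_def mult_left_le)
  finally have 1: "norm (integral {a..b} (KK t (complex_of_real x + \<i> * complex_of_real y))) \<le> B" .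
  have "norm (h_t a b t (complex_of_real x + \<i> * complex_of_real y)) = t / sqrt pi * norm (integral {a..b} (KK t (complex_of_real x + \<i> * complex_of_real y)))"
    using assms by (simp add: h_t_eq norm_mult norm_divide)
  also have "\<dots> \<le> t / sqrt pi * B" using 1 assms by (intro mult_left_mono) auto
  finally show ?thesis unfolding B_def .
qed

lemma gauss_int:
  fixes c :: real
  assumes "c > 0"
  shows "(\<lambda>x. exp (- c * x\<^sup>2) * \<bar>x\<bar> ^ k) integrable_on UNIV"
proof -
  define \<sigma> where "\<sigma> = sqrt (1 / (2 * c))"
  have s: "\<sigma> > 0" using assms by (simp add: \<sigma>_def)
  have s2: "2 * \<sigma>\<^sup>2 = 1 / c" using assms by (simp add: \<sigma>_def)
  have "integrable lborel (\<lambda>x. normal_density 0 \<sigma> x * \<bar>x - 0\<bar> ^ k)"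
    by (rule integrable_normal_moment_abs[OF s])
  then have "(\<lambda>x. normal_density 0 \<sigma> x * \<bar>x\<bar> ^ k) integrable_on UNIV"
    by (simp add: integrable_on_lborel)
  then have "(\<lambda>x. sqrt (2 * pi * \<sigma>\<^sup>2) * (normal_density 0 \<sigma> x * \<bar>x\<bar> ^ k)) integrable_on UNIV"
    by (rule integrable_on_mult_right)
  moreover have "sqrt (2 * pi * \<sigma>\<^sup>2) * (normal_density 0 \<sigma> x * \<bar>x\<bar> ^ k) = exp (- c * x\<^sup>2) * \<bar>x\<bar> ^ k" for x
  proof -
    have "- x\<^sup>2 / (2 * \<sigma>\<^sup>2) = - c * x\<^sup>2" unfolding s2 by simp
    moreover have "sqrt (2 * pi * \<sigma>\<^sup>2) > 0" using s by simp
    ultimately show ?thesis using s unfolding normal_density_def by (simp add: field_simps)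
  qed
  ultimately show ?thesis by simp
qed

lemma h_cont: "continuous_on UNIV (h_t a b t)"
  using h_holo holomorphic_on_imp_continuous_on by blast

lemma h_real_bound:
  assumes "0 \<le> a" "a \<le> b" "b \<le> 1" "0 \<le> t"
  shows "norm (h_t a b t (complex_of_real x)) \<le> t / sqrt pi * (exp (t\<^sup>2 * Mf 0) * exp (- 2 * t\<^sup>2 * x\<^sup>2))"
  using norm_h_bound[OF assms, of x 0] by simp

lemma g_deriv:
  assumes "0 \<le> a" "a \<le> b" "b \<le> 1" "0 < t"
  shows "(g_t a b t has_vector_derivative
     (complex_of_real (1 / (2 * pi)) * integral UNIV (\<lambda>r. h_t a b t (complex_of_real r) * (\<i> * complex_of_real r) * exp (\<i> * complex_of_real (r * u))))) (at u)"
proof -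
  define C where "C = t / sqrt pi * exp (t\<^sup>2 * Mf 0)"
  define w where "w r = C * (exp (- (2 * t\<^sup>2) * r\<^sup>2) * \<bar>r\<bar> ^ 0 + exp (- (2 * t\<^sup>2) * r\<^sup>2) * \<bar>r\<bar> ^ 1)" for r
  have C0: "C \<ge> 0" using assms by (simp add: C_def)
  have wi: "w integrable_on UNIV"
    unfolding w_def using assms
    by (intro integrable_on_mult_right integrable_add gauss_int) auto
  have b0: "norm (h_t a b t (complex_of_real r)) \<le> C * exp (- (2 * t\<^sup>2) * r\<^sup>2)" for r
    using h_real_bound[OF assms(1-3), of t r] assms by (simp add: C_def)
  have "((\<lambda>v. integral UNIV (\<lambda>r. h_t a b t (complex_of_real r) * exp (\<i> * complex_of_real (r * v)))) has_vector_derivative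
          integral UNIV (\<lambda>r. h_t a b t (complex_of_real r) * (\<i> * complex_of_real r) * exp (\<i> * complex_of_real (r * u)))) (at u)"
  proof (rule deriv_under[where w=w])
    show "continuous_on UNIV (\<lambda>r. h_t a b t (complex_of_real r))"
      by (intro continuous_on_compose2[OF h_cont] continuous_intros) auto
    show "norm (h_t a b t (complex_of_real r)) \<le> w r" for r
    proof -
      have "norm (h_t a b t (complex_of_real r)) \<le> C * exp (- (2 * t\<^sup>2) * r\<^sup>2)" by (rule b0)
      also have "\<dots> \<le> w r" unfolding w_def using C0 by (intro mult_left_mono) auto
      finally show ?thesis .
    qed
    show "\<bar>r\<bar> * norm (h_t a b t (complex_of_real r)) \<le> w r" for r
    proof -
      have "\<bar>r\<bar> * norm (h_t a b t (complex_of_real r)) \<le> \<bar>r\<bar> * (C * exp (- (2 * t\<^sup>2) * r\<^sup>2))"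
        by (intro mult_left_mono b0) auto
      also have "\<dots> \<le> w r" unfolding w_def using C0 by (simp add: algebra_simps)
      finally show ?thesis .
    qed
  qed (rule wi)
  then show ?thesis
    unfolding g_t_def[abs_def] by (rule has_vector_derivative_mult_right)
qed

lemma prim_seg:
  fixes F P :: "complex \<Rightarrow> complex"
  assumes P: "\<And>z. (P has_field_derivative F z) (at z)" and ab: "a \<le> b"
  shows "((\<lambda>x. d * F (c + complex_of_real x * d)) has_integral (P (c + complex_of_real b * d) - P (c + complex_of_real a * d))) {a..b}"
proof -
  have "((\<lambda>x. P (c + complex_of_real x * d)) has_vector_derivative d * F (c + complex_of_real x * d)) (at x within {a..b})" for x
  proof -
    have f: "((\<lambda>x. c + complex_of_real x * d) has_vector_derivative d) (at x)"
      by (auto intro!: derivative_eq_intros simp: has_vector_derivative_def scaleR_conv_of_real)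
    have "(((\<lambda>z. P z) \<circ> (\<lambda>x. c + complex_of_real x * d)) has_vector_derivative d * F (c + complex_of_real x * d)) (at x)"
      by (rule field_vector_diff_chain_at[OF f P])
    then show ?thesis by (auto simp: o_def intro: has_vector_derivative_at_within)
  qed
  then have "((\<lambda>x. d * F (c + complex_of_real x * d)) has_integral
      ((\<lambda>x. P (c + complex_of_real x * d)) b - (\<lambda>x. P (c + complex_of_real x * d)) a)) {a..b}"
    by (intro fundamental_theorem_of_calculus[OF ab])
  then show ?thesis by simp
qed

lemma shift_bound:
  fixes F :: "complex \<Rightarrow> complex"
  assumes holo: "F holomorphic_on UNIV" and s: "0 \<le> s" and y: "0 \<le> y"
    and B1: "\<And>v. v \<in> {0..y} \<Longrightarrow> norm (F (complex_of_real s + \<i> * complex_of_real v)) \<le> B1"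
    and B2: "\<And>v. v \<in> {0..y} \<Longrightarrow> norm (F (complex_of_real (-s) + \<i> * complex_of_real v)) \<le> B2"
  shows "norm (integral {-s..s} (\<lambda>x. F (complex_of_real x)) - integral {-s..s} (\<lambda>x. F (complex_of_real x + \<i> * complex_of_real y)))
          \<le> y * B1 + y * B2"
proof -
  obtain P where P0: "\<And>z. z \<in> UNIV \<Longrightarrow> (P has_field_derivative F z) (at z within UNIV)"
    using holomorphic_convex_primitive'[OF convex_UNIV open_UNIV holo] by blast
  have P: "(P has_field_derivative F z) (at z)" for z using P0[of z] by simp
  have contF: "continuous_on S F" for S using holo holomorphic_on_imp_continuous_on continuous_on_subset by blast
  have h1: "integral {-s..s} (\<lambda>x. F (complex_of_real x)) = P (complex_of_real s) - P (complex_of_real (-s))"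
    using prim_seg[OF P, of "-s" s 1 0] s by (simp add: integral_unique)
  have h2: "integral {-s..s} (\<lambda>x. F (complex_of_real x + \<i> * complex_of_real y)) = P (complex_of_real s + \<i> * complex_of_real y) - P (complex_of_real (-s) + \<i> * complex_of_real y)"
    using prim_seg[OF P, of "-s" s 1 "\<i> * complex_of_real y"] s by (simp add: integral_unique add.commute)
  have vert: "norm (P (complex_of_real c + \<i> * complex_of_real y) - P (complex_of_real c)) \<le> y * B"
    if "\<And>v. v \<in> {0..y} \<Longrightarrow> norm (F (complex_of_real c + \<i> * complex_of_real v)) \<le> B" for c B
  proof -
    have "((\<lambda>v. \<i> * F (complex_of_real c + \<i> * complex_of_real v)) has_integral
           (P (complex_of_real c + \<i> * complex_of_real y) - P (complex_of_real c))) {0..y}"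
      using prim_seg[OF P y, of "\<i>" "complex_of_real c"] by (simp add: mult.commute)
    then have "P (complex_of_real c + \<i> * complex_of_real y) - P (complex_of_real c) = integral {0..y} (\<lambda>v. \<i> * F (complex_of_real c + \<i> * complex_of_real v))"
      by (rule integral_unique[symmetric])
    also have "norm \<dots> \<le> B * (y - 0)"
    proof (rule integral_bound[OF y])
      show "continuous_on {0..y} (\<lambda>v. \<i> * F (complex_of_real c + \<i> * complex_of_real v))"
        by (intro continuous_intros continuous_on_compose2[OF contF[of UNIV]]) auto
      show "norm (\<i> * F (complex_of_real c + \<i> * complex_of_real v)) \<le> B" if "v \<in> {0..y}" for v
        using \<open>\<And>v. v \<in> {0..y} \<Longrightarrow> norm (F (complex_of_real c + \<i> * complex_of_real v)) \<le> B\<close>[OF that]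
        by (simp add: norm_mult)
    qed
    finally show ?thesis by (simp add: mult.commute)
  qed
  have v1: "norm (P (complex_of_real s + \<i> * complex_of_real y) - P (complex_of_real s)) \<le> y * B1"
    by (rule vert) (rule B1)
  have v2: "norm (P (complex_of_real (-s) + \<i> * complex_of_real y) - P (complex_of_real (-s))) \<le> y * B2"
    by (rule vert) (rule B2)
  have "integral {-s..s} (\<lambda>x. F (complex_of_real x)) - integral {-s..s} (\<lambda>x. F (complex_of_real x + \<i> * complex_of_real y))
       = (P (complex_of_real (-s) + \<i> * complex_of_real y) - P (complex_of_real (-s))) - (P (complex_of_real s + \<i> * complex_of_real y) - P (complex_of_real s))"
    unfolding h1 h2 by (simp add: algebra_simps)
  also have "norm \<dots> \<le> y * B2 + y * B1"
    by (rule order_trans[OF norm_triangle_ineq4]) (use v1 v2 in auto)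
  finally show ?thesis by simp
qed

lemma lim_int_UNIV:
  fixes f :: "real \<Rightarrow> complex"
  assumes cf: "continuous_on UNIV f" and b: "\<And>x. norm (f x) \<le> g x" and gi: "g integrable_on UNIV"
  shows "(\<lambda>n. integral {- real n..real n} f) \<longlonglongrightarrow> integral UNIV f"
proof -
  define fn where "fn n x = (if x \<in> {- real n..real n} then f x else 0)" for n x
  have p1: "\<And>n. fn n integrable_on UNIV"
    unfolding fn_def by (rule integrable_restrict_UNIV[THEN iffD2])
      (rule integrable_continuous_interval[OF continuous_on_subset[OF cf]], auto)
  have p3: "\<And>n x. x \<in> UNIV \<Longrightarrow> norm (fn n x) \<le> g x"
    unfolding fn_def using b order_trans[OF norm_ge_zero b] by auto
  have p4: "\<And>x. x \<in> UNIV \<Longrightarrow> (\<lambda>n. fn n x) \<longlonglongrightarrow> f x"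
  proof -
    fix x :: real
    obtain N :: nat where N: "\<bar>x\<bar> \<le> real N" using real_arch_simple by blast
    have "\<forall>n\<ge>N. fn n x = f x" unfolding fn_def using N by auto
    then show "(\<lambda>n. fn n x) \<longlonglongrightarrow> f x"
      by (intro tendsto_eventually) (auto simp: eventually_sequentially)
  qed
  have "(\<lambda>n. integral UNIV (fn n)) \<longlonglongrightarrow> integral UNIV f"
    by (rule Equivalence_Lebesgue_Henstock_Integration.dominated_convergence(2)[OF p1 gi p3 p4])
  moreover have "integral UNIV (fn n) = integral {- real n..real n} f" for n
    unfolding fn_def by (rule integral_restrict_UNIV)
  ultimately show ?thesis by simp
qed


lemma int_absx:
  fixes t D s :: real
  assumes t: "t > 0" and s: "s \<ge> 0"
  shows "((\<lambda>x. \<bar>x\<bar> / (1 + t\<^sup>2 * (x\<^sup>2 - D)\<^sup>2)) has_integral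
          ((arctan (t * (s\<^sup>2 - D)) - arctan (t * (0 - D))) / (2 * t) + (arctan (t * (s\<^sup>2 - D)) - arctan (t * (0 - D))) / (2 * t))) {-s..s}"
proof -
  have d: "((\<lambda>x. arctan (t * (x\<^sup>2 - D)) / (2 * t)) has_vector_derivative x / (1 + t\<^sup>2 * (x\<^sup>2 - D)\<^sup>2)) (at x within S)" for x S
  proof -
    have "((\<lambda>x. arctan (t * (x\<^sup>2 - D)) / (2 * t)) has_real_derivative
           (inverse (1 + (t * (x\<^sup>2 - D))\<^sup>2) * (t * (2 * x))) / (2 * t)) (at x within S)"
      by (auto intro!: derivative_eq_intros)
    moreover have "(inverse (1 + (t * (x\<^sup>2 - D))\<^sup>2) * (t * (2 * x))) / (2 * t) = x / (1 + t\<^sup>2 * (x\<^sup>2 - D)\<^sup>2)"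
    proof -
      have "0 \<le> t\<^sup>2 * (x\<^sup>2 - D)\<^sup>2" by simp
      then have A: "1 + t\<^sup>2 * (x\<^sup>2 - D)\<^sup>2 \<noteq> 0" by linarith
      have e1: "(t * (x\<^sup>2 - D))\<^sup>2 = t\<^sup>2 * (x\<^sup>2 - D)\<^sup>2" by (simp add: power_mult_distrib)
      have e2: "(t * (2 * x)) / (2 * t) = x" using t by simp
      have "(inverse (1 + (t * (x\<^sup>2 - D))\<^sup>2) * (t * (2 * x))) / (2 * t) = inverse (1 + (t * (x\<^sup>2 - D))\<^sup>2) * ((t * (2 * x)) / (2 * t))"
        by (simp only: times_divide_eq_right)
      also have "\<dots> = x / (1 + t\<^sup>2 * (x\<^sup>2 - D)\<^sup>2)" unfolding e1 e2 by (simp add: divide_inverse mult.commute)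
      finally show ?thesis .
    qed
    ultimately show ?thesis by (simp add: has_real_derivative_iff_has_vector_derivative)
  qed
  have d2: "((\<lambda>x. - (arctan (t * (x\<^sup>2 - D)) / (2 * t))) has_vector_derivative - (x / (1 + t\<^sup>2 * (x\<^sup>2 - D)\<^sup>2))) (at x within S)" for x S
    using d[of x S] by (rule has_vector_derivative_minus)
  have i1: "((\<lambda>x. x / (1 + t\<^sup>2 * (x\<^sup>2 - D)\<^sup>2)) has_integral
     ((\<lambda>x. arctan (t * (x\<^sup>2 - D)) / (2 * t)) s - (\<lambda>x. arctan (t * (x\<^sup>2 - D)) / (2 * t)) 0)) {0..s}"
    by (rule fundamental_theorem_of_calculus[OF s d])
  have i2: "((\<lambda>x. - (x / (1 + t\<^sup>2 * (x\<^sup>2 - D)\<^sup>2))) has_integral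
     ((\<lambda>x. - (arctan (t * (x\<^sup>2 - D)) / (2 * t))) 0 - (\<lambda>x. - (arctan (t * (x\<^sup>2 - D)) / (2 * t))) (-s))) {-s..0}"
    using s by (intro fundamental_theorem_of_calculus d2) auto
  have j1: "((\<lambda>x. \<bar>x\<bar> / (1 + t\<^sup>2 * (x\<^sup>2 - D)\<^sup>2)) has_integral
     ((arctan (t * (s\<^sup>2 - D)) - arctan (t * (0 - D))) / (2 * t))) {0..s}"
  proof -
    have "((\<lambda>x. \<bar>x\<bar> / (1 + t\<^sup>2 * (x\<^sup>2 - D)\<^sup>2)) has_integral
     ((\<lambda>x. arctan (t * (x\<^sup>2 - D)) / (2 * t)) s - (\<lambda>x. arctan (t * (x\<^sup>2 - D)) / (2 * t)) 0)) {0..s}"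
      by (rule has_integral_eq[OF _ i1]) auto
    then show ?thesis by (simp add: diff_divide_distrib)
  qed
  have j2: "((\<lambda>x. \<bar>x\<bar> / (1 + t\<^sup>2 * (x\<^sup>2 - D)\<^sup>2)) has_integral
     ((arctan (t * (s\<^sup>2 - D)) - arctan (t * (0 - D))) / (2 * t))) {-s..0}"
  proof -
    have "((\<lambda>x. \<bar>x\<bar> / (1 + t\<^sup>2 * (x\<^sup>2 - D)\<^sup>2)) has_integral
     ((\<lambda>x. - (arctan (t * (x\<^sup>2 - D)) / (2 * t))) 0 - (\<lambda>x. - (arctan (t * (x\<^sup>2 - D)) / (2 * t))) (-s))) {-s..0}"
      by (rule has_integral_eq[OF _ i2]) auto
    then show ?thesis by (simp add: diff_divide_distrib)
  qed
  show ?thesis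
    using has_integral_combine[of "-s" 0 s, OF _ _ j2 j1] s by simp
qed

lemma int_absx_le:
  fixes t D s :: real
  assumes t: "t > 0" and s: "s \<ge> 0"
  shows "integral {-s..s} (\<lambda>x. \<bar>x\<bar> / (1 + t\<^sup>2 * (x\<^sup>2 - D)\<^sup>2)) \<le> pi / t"
proof -
  have "(arctan (t * (s\<^sup>2 - D)) - arctan (t * (0 - D))) \<le> pi"
    using arctan_bounded[of "t * (s\<^sup>2 - D)"] arctan_bounded[of "t * (0 - D)"] by linarith
  then have "(arctan (t * (s\<^sup>2 - D)) - arctan (t * (0 - D))) / t \<le> pi / t"
    using t by (intro divide_right_mono) auto
  moreover have "(arctan (t * (s\<^sup>2 - D)) - arctan (t * (0 - D))) / (2 * t) + (arctan (t * (s\<^sup>2 - D)) - arctan (t * (0 - D))) / (2 * t)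
     = (arctan (t * (s\<^sup>2 - D)) - arctan (t * (0 - D))) / t" using t by (simp add: field_simps)
  ultimately have "(arctan (t * (s\<^sup>2 - D)) - arctan (t * (0 - D))) / (2 * t) + (arctan (t * (s\<^sup>2 - D)) - arctan (t * (0 - D))) / (2 * t) \<le> pi / t"
    by simp
  then show ?thesis using integral_unique[OF int_absx[OF t s, of D]] by simp
qed

lemma int_cauchy:
  fixes s :: real
  assumes s: "s \<ge> 0"
  shows "((\<lambda>x. 1 / (1 + x\<^sup>2)) has_integral (arctan s - arctan (-s))) {-s..s}"
proof -
  have "((\<lambda>x. 1 / (1 + x\<^sup>2)) has_integral (arctan s - arctan (-s))) {-s..s}"
  proof -
    have "(arctan has_vector_derivative 1 / (1 + x\<^sup>2)) (at x within {-s..s})" for x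
      using DERIV_arctan[of x] by (auto simp: has_real_derivative_iff_has_vector_derivative[symmetric] divide_inverse
           intro: has_field_derivative_at_within)
    then show ?thesis using s by (intro fundamental_theorem_of_calculus) auto
  qed
  then show ?thesis .
qed

lemma dom_int:
  fixes t D s y :: real
  assumes t: "t > 0" and s: "s \<ge> 0" and y: "y \<ge> 0"
  shows "(\<lambda>x. (1 + y) * (\<bar>x\<bar> / (1 + t\<^sup>2 * (x\<^sup>2 - D)\<^sup>2)) + 2 * y * (1 / (1 + x\<^sup>2))) integrable_on {-s..s}"
    and "integral {-s..s} (\<lambda>x. (1 + y) * (\<bar>x\<bar> / (1 + t\<^sup>2 * (x\<^sup>2 - D)\<^sup>2)) + 2 * y * (1 / (1 + x\<^sup>2)))
           \<le> (1 + y) * pi / t + 2 * pi * y"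
proof -
  have i1: "(\<lambda>x. \<bar>x\<bar> / (1 + t\<^sup>2 * (x\<^sup>2 - D)\<^sup>2)) integrable_on {-s..s}"
    using int_absx[OF t s] by blast
  have i2: "(\<lambda>x. 1 / (1 + x\<^sup>2)) integrable_on {-s..s}"
    using int_cauchy[OF s] by blast
  show "(\<lambda>x. (1 + y) * (\<bar>x\<bar> / (1 + t\<^sup>2 * (x\<^sup>2 - D)\<^sup>2)) + 2 * y * (1 / (1 + x\<^sup>2))) integrable_on {-s..s}"
    by (intro integrable_add integrable_on_mult_right i1 i2)
  have "integral {-s..s} (\<lambda>x. (1 + y) * (\<bar>x\<bar> / (1 + t\<^sup>2 * (x\<^sup>2 - D)\<^sup>2)) + 2 * y * (1 / (1 + x\<^sup>2)))
     = (1 + y) * integral {-s..s} (\<lambda>x. \<bar>x\<bar> / (1 + t\<^sup>2 * (x\<^sup>2 - D)\<^sup>2)) + 2 * y * integral {-s..s} (\<lambda>x. 1 / (1 + x\<^sup>2))"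
    by (subst integral_add, (intro integrable_on_mult_right i1 i2)+, simp only: integral_mult_right)
  also have "\<dots> \<le> (1 + y) * (pi / t) + 2 * y * pi"
  proof (intro add_mono mult_left_mono)
    show "integral {-s..s} (\<lambda>x. \<bar>x\<bar> / (1 + t\<^sup>2 * (x\<^sup>2 - D)\<^sup>2)) \<le> pi / t" by (rule int_absx_le[OF t s])
    show "integral {-s..s} (\<lambda>x. 1 / (1 + x\<^sup>2)) \<le> pi"
      using integral_unique[OF int_cauchy[OF s]] arctan_bounded[of s] arctan_bounded[of "-s"] by simp
  qed (use y in auto)
  finally show "integral {-s..s} (\<lambda>x. (1 + y) * (\<bar>x\<bar> / (1 + t\<^sup>2 * (x\<^sup>2 - D)\<^sup>2)) + 2 * y * (1 / (1 + x\<^sup>2)))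
           \<le> (1 + y) * pi / t + 2 * pi * y" by (simp add: algebra_simps)
qed

lemma exp_neg_le: "(v::real) \<ge> 0 \<Longrightarrow> exp (- v) \<le> 1 / (1 + v)"
proof -
  assume v: "v \<ge> 0"
  have "1 + v \<le> exp v" by simp
  then show ?thesis using v by (simp add: exp_minus field_simps)
qed

lemma dom_point:
  fixes t D x y v :: real
  assumes y: "y \<ge> 0" and v: "v \<ge> 0"
  shows "(\<bar>x\<bar> + y) * exp (- v) \<le> (1 + y) * (\<bar>x\<bar> / (1 + v)) + 2 * y * (1 / (1 + x\<^sup>2))"
proof -
  have e: "exp (- v) \<le> 1 / (1 + v)" using exp_neg_le[OF v] .
  have e1: "exp (- v) \<le> 1" using v by simp
  have p1: "y * (\<bar>x\<bar> / (1 + v)) \<ge> 0" using y v by simp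
  have p2: "2 * y * (1 / (1 + x\<^sup>2)) \<ge> 0" using y by simp
  have "y * exp (- v) \<le> y * (\<bar>x\<bar> / (1 + v)) + 2 * y * (1 / (1 + x\<^sup>2))"
  proof (cases "\<bar>x\<bar> \<ge> 1")
    case True
    have "1 / (1 + v) \<le> \<bar>x\<bar> / (1 + v)" using True v by (intro divide_right_mono) auto
    then have "exp (- v) \<le> \<bar>x\<bar> / (1 + v)" using e by linarith
    then have "y * exp (- v) \<le> y * (\<bar>x\<bar> / (1 + v))" using y by (rule mult_left_mono)
    then show ?thesis using p2 by linarith
  next
    case False
    have "x\<^sup>2 = \<bar>x\<bar> * \<bar>x\<bar>" by (simp add: power2_eq_square)
    also have "\<dots> \<le> 1" using False by (intro mult_le_one) auto
    finally have "x\<^sup>2 \<le> 1" .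
    moreover have "0 < 1 + x\<^sup>2" using zero_le_power2[of x] by linarith
    ultimately have "1 \<le> 2 * (1 / (1 + x\<^sup>2))" by (simp add: le_divide_eq)
    then have "exp (- v) \<le> 2 * (1 / (1 + x\<^sup>2))" using e1 by linarith
    then have "y * exp (- v) \<le> y * (2 * (1 / (1 + x\<^sup>2)))" using y by (rule mult_left_mono)
    then have "y * exp (- v) \<le> 2 * y * (1 / (1 + x\<^sup>2))" using mult.commute[of y 2] by simp
    then show ?thesis by (rule add_increasing[OF p1])
  qed
  moreover have "\<bar>x\<bar> * exp (- v) \<le> \<bar>x\<bar> * (1 / (1 + v))" using mult_left_mono[OF e abs_ge_zero] .
  moreover have "(1 + y) * (\<bar>x\<bar> / (1 + v)) = \<bar>x\<bar> * (1 / (1 + v)) + y * (\<bar>x\<bar> / (1 + v))" by (simp add: algebra_simps add_divide_distrib)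
  moreover have "(\<bar>x\<bar> + y) * exp (- v) = \<bar>x\<bar> * exp (- v) + y * exp (- v)" by (simp add: algebra_simps)
  ultimately show ?thesis by linarith
qed


definition EE :: "real \<Rightarrow> real \<Rightarrow> real \<Rightarrow> real \<Rightarrow> real" where
  "EE t y x \<mu> = exp (- (t\<^sup>2 * qq x y \<mu>))"

lemma EE_cont: "continuous_on S (\<lambda>(x, \<mu>). EE t y x \<mu>)"
  unfolding EE_def qq_def case_prod_unfold by (intro continuous_intros)

lemma EE_cont1: "continuous_on S (EE t y x)"
  unfolding EE_def qq_def by (intro continuous_intros)

lemma EE_cont2: "continuous_on S (\<lambda>x. EE t y x \<mu>)"
  unfolding EE_def qq_def by (intro continuous_intros)

lemma norm_cplx_le: "norm (complex_of_real x + \<i> * complex_of_real y) \<le> \<bar>x\<bar> + \<bar>y\<bar>"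
  using norm_triangle_ineq[of "complex_of_real x" "\<i> * complex_of_real y"] by (simp add: norm_mult)

lemma Phi_point:
  assumes t: "t \<ge> 0" and y: "y \<ge> 0"
  shows "norm ((complex_of_real x + \<i> * complex_of_real y) * h_t a b t (complex_of_real x + \<i> * complex_of_real y)
              * exp (\<i> * (complex_of_real x + \<i> * complex_of_real y) * complex_of_real u))
         \<le> t / sqrt pi * exp (- (y * u)) * ((\<bar>x\<bar> + y) * integral {a..b} (EE t y x))"
proof -
  have n1: "norm (complex_of_real x + \<i> * complex_of_real y) \<le> \<bar>x\<bar> + y" using norm_cplx_le[of x y] y by simp
  have n2: "norm (h_t a b t (complex_of_real x + \<i> * complex_of_real y)) \<le> t / sqrt pi * integral {a..b} (EE t y x)"
    using norm_h_int[OF t, of a b "complex_of_real x + \<i> * complex_of_real y"] by (simp add: norm_KK EE_def[abs_def])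
  have n3: "norm (exp (\<i> * (complex_of_real x + \<i> * complex_of_real y) * complex_of_real u)) = exp (- (y * u))"
    by simp
  have "norm ((complex_of_real x + \<i> * complex_of_real y) * h_t a b t (complex_of_real x + \<i> * complex_of_real y)
              * exp (\<i> * (complex_of_real x + \<i> * complex_of_real y) * complex_of_real u))
       = norm (complex_of_real x + \<i> * complex_of_real y) * norm (h_t a b t (complex_of_real x + \<i> * complex_of_real y)) * exp (- (y * u))"
    by (simp only: norm_mult n3)
  also have "\<dots> \<le> (\<bar>x\<bar> + y) * (t / sqrt pi * integral {a..b} (EE t y x)) * exp (- (y * u))"
    using y by (intro mult_right_mono mult_mono n1 n2) auto
  also have "\<dots> = t / sqrt pi * exp (- (y * u)) * ((\<bar>x\<bar> + y) * integral {a..b} (EE t y x))"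
    by (simp only: mult_ac)
  finally show ?thesis .
qed

lemma inner_bound:
  assumes t: "t > 0" and y: "y \<ge> 0" and s: "s \<ge> 0"
    and D: "\<And>x. qq x y \<mu> \<ge> (x\<^sup>2 - D)\<^sup>2 - R"
  shows "integral {-s..s} (\<lambda>x. (\<bar>x\<bar> + y) * EE t y x \<mu>) \<le> exp (t\<^sup>2 * R) * ((1 + y) * pi / t + 2 * pi * y)"
proof -
  define dom where "dom x = (1 + y) * (\<bar>x\<bar> / (1 + t\<^sup>2 * (x\<^sup>2 - D)\<^sup>2)) + 2 * y * (1 / (1 + x\<^sup>2))" for x
  have pt: "(\<bar>x\<bar> + y) * EE t y x \<mu> \<le> exp (t\<^sup>2 * R) * dom x" for x
  proof -
    have "t\<^sup>2 * qq x y \<mu> \<ge> t\<^sup>2 * ((x\<^sup>2 - D)\<^sup>2 - R)" using D[of x] by (intro mult_left_mono) auto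
    then have "EE t y x \<mu> \<le> exp (t\<^sup>2 * R) * exp (- (t\<^sup>2 * (x\<^sup>2 - D)\<^sup>2))"
      unfolding EE_def by (simp add: algebra_simps flip: exp_add)
    then have "(\<bar>x\<bar> + y) * EE t y x \<mu> \<le> (\<bar>x\<bar> + y) * (exp (t\<^sup>2 * R) * exp (- (t\<^sup>2 * (x\<^sup>2 - D)\<^sup>2)))"
      using y by (intro mult_left_mono) auto
    also have "\<dots> = exp (t\<^sup>2 * R) * ((\<bar>x\<bar> + y) * exp (- (t\<^sup>2 * (x\<^sup>2 - D)\<^sup>2)))" by simp
    also have "\<dots> \<le> exp (t\<^sup>2 * R) * dom x"
      unfolding dom_def by (intro mult_left_mono dom_point y) auto
    finally show ?thesis .
  qed
  have "integral {-s..s} (\<lambda>x. (\<bar>x\<bar> + y) * EE t y x \<mu>) \<le> integral {-s..s} (\<lambda>x. exp (t\<^sup>2 * R) * dom x)"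
  proof (rule integral_le)
    show "(\<lambda>x. (\<bar>x\<bar> + y) * EE t y x \<mu>) integrable_on {-s..s}"
      by (intro integrable_continuous_interval continuous_intros EE_cont2)
    show "(\<lambda>x. exp (t\<^sup>2 * R) * dom x) integrable_on {-s..s}"
      unfolding dom_def by (intro integrable_on_mult_right dom_int(1)[OF t s y])
  qed (rule pt)
  also have "\<dots> = exp (t\<^sup>2 * R) * integral {-s..s} dom" by simp
  also have "\<dots> \<le> exp (t\<^sup>2 * R) * ((1 + y) * pi / t + 2 * pi * y)"
    unfolding dom_def by (intro mult_left_mono dom_int(2)[OF t s y]) auto
  finally show ?thesis .
qed


lemma shifted_bound:
  assumes ab: "0 \<le> a" "a \<le> b" "b \<le> 1" and t: "t > 0" and y: "y \<ge> 0" and s: "s \<ge> 0"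
    and Rc: "continuous_on {a..b} R"
    and Dex: "\<And>\<mu>. \<mu> \<in> {a..b} \<Longrightarrow> \<exists>D. \<forall>x. qq x y \<mu> \<ge> (x\<^sup>2 - D)\<^sup>2 - R \<mu>"
  shows "norm (integral {-s..s} (\<lambda>x. (complex_of_real x + \<i> * complex_of_real y) * h_t a b t (complex_of_real x + \<i> * complex_of_real y)
              * exp (\<i> * (complex_of_real x + \<i> * complex_of_real y) * complex_of_real u)))
     \<le> t / sqrt pi * exp (- (y * u)) * (((1 + y) * pi / t + 2 * pi * y) * integral {a..b} (\<lambda>\<mu>. exp (t\<^sup>2 * R \<mu>)))"
proof -
  define c where "c = t / sqrt pi * exp (- (y * u))"
  define W where "W = (1 + y) * pi / t + 2 * pi * y"
  have c0: "c \<ge> 0" using t by (simp add: c_def)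
  have contE: "continuous_on UNIV (\<lambda>x. integral {a..b} (EE t y x))"
    using integral_continuous_on_param[OF EE_cont[of "UNIV \<times> cbox a b" t y]] by simp
  have contE2: "continuous_on UNIV (\<lambda>\<mu>. integral {-s..s} (\<lambda>x. (\<bar>x\<bar> + y) * EE t y x \<mu>))"
  proof -
    have "continuous_on (UNIV \<times> cbox (-s) s) (\<lambda>(\<mu>, x). (\<bar>x\<bar> + y) * EE t y x \<mu>)"
      unfolding EE_def qq_def case_prod_unfold by (intro continuous_intros)
    from integral_continuous_on_param[OF this] show ?thesis by simp
  qed
  have int1: "(\<lambda>x. (complex_of_real x + \<i> * complex_of_real y) * h_t a b t (complex_of_real x + \<i> * complex_of_real y)
              * exp (\<i> * (complex_of_real x + \<i> * complex_of_real y) * complex_of_real u)) integrable_on {-s..s}"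
    by (intro integrable_continuous_interval continuous_intros continuous_on_compose2[OF h_cont]) auto
  have int2: "(\<lambda>x. c * ((\<bar>x\<bar> + y) * integral {a..b} (EE t y x))) integrable_on {-s..s}"
    by (intro integrable_continuous_interval continuous_intros continuous_on_subset[OF contE]) auto
  have "norm (integral {-s..s} (\<lambda>x. (complex_of_real x + \<i> * complex_of_real y) * h_t a b t (complex_of_real x + \<i> * complex_of_real y)
              * exp (\<i> * (complex_of_real x + \<i> * complex_of_real y) * complex_of_real u)))
       \<le> integral {-s..s} (\<lambda>x. c * ((\<bar>x\<bar> + y) * integral {a..b} (EE t y x)))"
    by (rule integral_norm_bound_integral[OF int1 int2]) (unfold c_def, rule Phi_point, use t y in auto)
  also have "\<dots> = c * integral {-s..s} (\<lambda>x. integral {a..b} (\<lambda>\<mu>. (\<bar>x\<bar> + y) * EE t y x \<mu>))"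
    by simp
  also have "integral {-s..s} (\<lambda>x. integral {a..b} (\<lambda>\<mu>. (\<bar>x\<bar> + y) * EE t y x \<mu>))
           = integral {a..b} (\<lambda>\<mu>. integral {-s..s} (\<lambda>x. (\<bar>x\<bar> + y) * EE t y x \<mu>))"
  proof -
    have "continuous_on (cbox (-s, a) (s, b)) (\<lambda>(x, \<mu>). (\<bar>x\<bar> + y) * EE t y x \<mu>)"
      unfolding EE_def qq_def case_prod_unfold by (intro continuous_intros)
    from integral_swap_continuous[OF this] show ?thesis by simp
  qed
  also have "c * integral {a..b} (\<lambda>\<mu>. integral {-s..s} (\<lambda>x. (\<bar>x\<bar> + y) * EE t y x \<mu>))
          \<le> c * integral {a..b} (\<lambda>\<mu>. exp (t\<^sup>2 * R \<mu>) * W)"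
  proof (intro mult_left_mono c0 integral_le)
    show "(\<lambda>\<mu>. integral {-s..s} (\<lambda>x. (\<bar>x\<bar> + y) * EE t y x \<mu>)) integrable_on {a..b}"
      by (intro integrable_continuous_interval continuous_on_subset[OF contE2]) auto
    show "(\<lambda>\<mu>. exp (t\<^sup>2 * R \<mu>) * W) integrable_on {a..b}"
      by (intro integrable_continuous_interval continuous_intros Rc)
    show "integral {-s..s} (\<lambda>x. (\<bar>x\<bar> + y) * EE t y x \<mu>) \<le> exp (t\<^sup>2 * R \<mu>) * W" if m: "\<mu> \<in> {a..b}" for \<mu>
    proof -
      obtain D where "\<forall>x. qq x y \<mu> \<ge> (x\<^sup>2 - D)\<^sup>2 - R \<mu>" using Dex[OF m] by blast
      then show ?thesis unfolding W_def by (intro inner_bound t y s) auto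
    qed
  qed
  also have "\<dots> = c * (W * integral {a..b} (\<lambda>\<mu>. exp (t\<^sup>2 * R \<mu>)))"
    by (simp add: mult.commute)
  finally show ?thesis unfolding c_def W_def .
qed


definition Phi :: "real \<Rightarrow> real \<Rightarrow> real \<Rightarrow> real \<Rightarrow> complex \<Rightarrow> complex" where
  "Phi a b t u z = z * h_t a b t z * exp (\<i> * z * complex_of_real u)"

lemma Phi_holo: "Phi a b t u holomorphic_on UNIV"
proof -
  have "h_t a b t holomorphic_on UNIV" by (rule h_holo)
  then show ?thesis unfolding Phi_def[abs_def] by (intro holomorphic_intros)
qed

lemma Mf_mono: "\<bar>v\<bar> \<le> Y \<Longrightarrow> Mf v \<le> Mf Y"
proof -
  assume a: "\<bar>v\<bar> \<le> Y"
  have "v\<^sup>2 = \<bar>v\<bar>\<^sup>2" by simp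
  also have "\<dots> \<le> Y\<^sup>2" by (rule power_mono[OF a]) simp
  finally have "v\<^sup>2 \<le> Y\<^sup>2" .
  then have "2* v\<^sup>2+1 \<le> 2*Y\<^sup>2+1" "0 \<le> 2* v\<^sup>2+1" "v\<^sup>2+3/4 \<le> Y\<^sup>2+3/4" "0 \<le> v\<^sup>2+3/4" by auto
  then have "(2* v\<^sup>2+1)\<^sup>2 \<le> (2*Y\<^sup>2+1)\<^sup>2" "2*(2* v\<^sup>2+1)*(v\<^sup>2+3/4) \<le> 2*(2*Y\<^sup>2+1)*(Y\<^sup>2+3/4)"
    by (auto intro!: power_mono mult_mono)
  then show ?thesis unfolding Mf_def by linarith
qed

lemma Phi_point2:
  assumes ab: "0 \<le> a" "a \<le> b" "b \<le> 1" and t: "t \<ge> 0" and v: "\<bar>v\<bar> \<le> Y" "v * u \<ge> 0"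
  shows "norm (Phi a b t u (complex_of_real s + \<i> * complex_of_real v))
     \<le> (\<bar>s\<bar> + Y) * (t / sqrt pi * exp (t\<^sup>2 * Mf Y)) * exp (- 2 * t\<^sup>2 * s\<^sup>2)"
proof -
  have Y0: "Y \<ge> 0" using v(1) by linarith
  have n1: "norm (complex_of_real s + \<i> * complex_of_real v) \<le> \<bar>s\<bar> + Y" using norm_cplx_le[of s v] v by simp
  have "norm (h_t a b t (complex_of_real s + \<i> * complex_of_real v)) \<le> t / sqrt pi * (exp (t\<^sup>2 * Mf v) * exp (- 2 * t\<^sup>2 * s\<^sup>2))"
    by (rule norm_h_bound[OF ab t])
  also have "\<dots> \<le> t / sqrt pi * (exp (t\<^sup>2 * Mf Y) * exp (- 2 * t\<^sup>2 * s\<^sup>2))"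
    using t Mf_mono[OF v(1)] by (intro mult_left_mono mult_right_mono) (auto intro: mult_left_mono)
  finally have n2: "norm (h_t a b t (complex_of_real s + \<i> * complex_of_real v)) \<le> t / sqrt pi * exp (t\<^sup>2 * Mf Y) * exp (- 2 * t\<^sup>2 * s\<^sup>2)"
    by (simp add: mult_ac)
  have n3: "norm (exp (\<i> * (complex_of_real s + \<i> * complex_of_real v) * complex_of_real u)) \<le> 1"
    using v by simp
  have "norm (Phi a b t u (complex_of_real s + \<i> * complex_of_real v)) =
        norm (complex_of_real s + \<i> * complex_of_real v) * norm (h_t a b t (complex_of_real s + \<i> * complex_of_real v))
        * norm (exp (\<i> * (complex_of_real s + \<i> * complex_of_real v) * complex_of_real u))"
    unfolding Phi_def by (simp only: norm_mult)
  also have "\<dots> \<le> (\<bar>s\<bar> + Y) * (t / sqrt pi * exp (t\<^sup>2 * Mf Y) * exp (- 2 * t\<^sup>2 * s\<^sup>2)) * 1"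
    using Y0 t by (intro mult_mono n1 n2 n3) (auto intro!: mult_nonneg_nonneg)
  finally show ?thesis by (simp add: mult_ac)
qed

lemma limit_bound:
  assumes ab: "0 \<le> a" "a \<le> b" "b \<le> 1" and t: "t > 0" and y: "y \<ge> 0" and u: "u \<ge> 0"
    and Bs: "\<And>s. s \<ge> 0 \<Longrightarrow> norm (integral {-s..s} (\<lambda>x. Phi a b t u (complex_of_real x + \<i> * complex_of_real y))) \<le> B"
  shows "norm (integral UNIV (\<lambda>x. Phi a b t u (complex_of_real x))) \<le> B"
proof -
  define K where "K = t / sqrt pi * exp (t\<^sup>2 * Mf y)"
  define K0 where "K0 = t / sqrt pi * exp (t\<^sup>2 * Mf 0)"
  have K0: "K \<ge> 0" "K0 \<ge> 0" using t by (auto simp: K_def K0_def)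
  have contPhi: "continuous_on S (Phi a b t u)" for S
    using Phi_holo holomorphic_on_imp_continuous_on continuous_on_subset by blast
  have real_pt: "norm (Phi a b t u (complex_of_real x)) \<le> K0 * (exp (- (2 * t\<^sup>2) * x\<^sup>2) * \<bar>x\<bar> ^ 1)" for x
    using Phi_point2[OF ab, of t 0 0 u x] t by (simp add: K0_def mult_ac)
  have lim1: "(\<lambda>n. integral {- real n..real n} (\<lambda>x. Phi a b t u (complex_of_real x))) \<longlonglongrightarrow> integral UNIV (\<lambda>x. Phi a b t u (complex_of_real x))"
  proof (rule lim_int_UNIV[OF _ real_pt])
    show "continuous_on UNIV (\<lambda>x. Phi a b t u (complex_of_real x))"
      by (intro continuous_on_compose2[OF contPhi[of UNIV]] continuous_intros) auto
    show "(\<lambda>x. K0 * (exp (- (2 * t\<^sup>2) * x\<^sup>2) * \<bar>x\<bar> ^ 1)) integrable_on UNIV"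
      using t by (intro integrable_on_mult_right gauss_int) auto
  qed
  define err where "err n = y * ((real n + y) * K * exp (- 2 * t\<^sup>2 * (real n)\<^sup>2)) + y * ((real n + y) * K * exp (- 2 * t\<^sup>2 * (real n)\<^sup>2))" for n
  have err_lim: "err \<longlonglongrightarrow> 0"
  proof -
    have "(\<lambda>n. (real n + y) * exp (- 2 * t\<^sup>2 * (real n)\<^sup>2)) \<longlonglongrightarrow> 0"
      using t by real_asymp
    then have "(\<lambda>n. 2 * y * K * ((real n + y) * exp (- 2 * t\<^sup>2 * (real n)\<^sup>2))) \<longlonglongrightarrow> 2 * y * K * 0"
      by (intro tendsto_intros)
    then show ?thesis unfolding err_def by (simp add: algebra_simps)
  qed
  have step: "norm (integral {- real n..real n} (\<lambda>x. Phi a b t u (complex_of_real x))) \<le> B + err n" for n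
  proof -
    define s where "s = real n"
    have s0: "s \<ge> 0" by (simp add: s_def)
    have sh: "norm (integral {-s..s} (\<lambda>x. Phi a b t u (complex_of_real x)) - integral {-s..s} (\<lambda>x. Phi a b t u (complex_of_real x + \<i> * complex_of_real y)))
          \<le> y * ((s + y) * K * exp (- 2 * t\<^sup>2 * s\<^sup>2)) + y * ((s + y) * K * exp (- 2 * t\<^sup>2 * s\<^sup>2))"
    proof (rule shift_bound[OF Phi_holo s0 y])
      show "norm (Phi a b t u (complex_of_real s + \<i> * complex_of_real v)) \<le> (s + y) * K * exp (- 2 * t\<^sup>2 * s\<^sup>2)" if "v \<in> {0..y}" for v
        using Phi_point2[OF ab, of t v y u s] that t u s0 by (simp add: K_def)
      show "norm (Phi a b t u (complex_of_real (-s) + \<i> * complex_of_real v)) \<le> (s + y) * K * exp (- 2 * t\<^sup>2 * s\<^sup>2)" if "v \<in> {0..y}" for v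
        using Phi_point2[OF ab, of t v y u "-s"] that t u s0 by (simp add: K_def)
    qed
    have "norm (integral {-s..s} (\<lambda>x. Phi a b t u (complex_of_real x)))
          \<le> norm (integral {-s..s} (\<lambda>x. Phi a b t u (complex_of_real x + \<i> * complex_of_real y)))
           + norm (integral {-s..s} (\<lambda>x. Phi a b t u (complex_of_real x)) - integral {-s..s} (\<lambda>x. Phi a b t u (complex_of_real x + \<i> * complex_of_real y)))"
      by (rule norm_triangle_sub)
    also have "\<dots> \<le> B + err n" unfolding err_def s_def[symmetric]
      using Bs[OF s0] sh by linarith
    finally show ?thesis unfolding s_def .
  qed
  have "(\<lambda>n. B + err n) \<longlonglongrightarrow> B + 0" by (intro tendsto_intros err_lim)
  then show ?thesis
    using LIMSEQ_le[OF tendsto_norm[OF lim1], of "\<lambda>n. B + err n" "B + 0"] step by auto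
qed


lemma Dex1: "\<exists>D. \<forall>x. qq x y \<mu> \<ge> (x\<^sup>2 - D)\<^sup>2 - (8*y^4 - 4*(1/4-\<mu>)*y\<^sup>2)"
  by (rule exI[of _ "3*y\<^sup>2 - (1/4-\<mu>)"]) (simp add: qq_ident)

lemma Dex2:
  assumes "\<mu> \<le> b" "b < 1/4" "0 \<le> \<mu>"
  shows "\<exists>D. \<forall>x. qq x y \<mu> \<ge> (x\<^sup>2 - D)\<^sup>2 - (8*y^4 + y\<^sup>2 - (1/4 - b)\<^sup>2)"
proof -
  define A where "A = 1/4 - \<mu>"
  define \<delta> where "\<delta> = 1/4 - b"
  have A: "\<delta> \<le> A" "0 < \<delta>" "A \<le> 1/4" using assms by (auto simp: A_def \<delta>_def)
  have q: "qq x y \<mu> = (x\<^sup>2 + (A - 3*y\<^sup>2))\<^sup>2 - 8*y^4 + 4*A*y\<^sup>2" for x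
    unfolding qq_ident A_def by (simp add: algebra_simps)
  have dd: "\<delta>\<^sup>2 \<le> A\<^sup>2" using A by (intro power_mono) auto
  show ?thesis
  proof (cases "A \<ge> 3*y\<^sup>2")
    case True
    show ?thesis
    proof (rule exI[of _ 0], intro allI)
      fix x
      have e: "(x\<^sup>2 + (A - 3*y\<^sup>2))\<^sup>2 = (x\<^sup>2)\<^sup>2 + (A - 3*y\<^sup>2)\<^sup>2 + 2 * (x\<^sup>2 * (A - 3*y\<^sup>2))"
        by (simp add: power2_eq_square algebra_simps)
      have "0 \<le> x\<^sup>2 * (A - 3*y\<^sup>2)" using True by simp
      then have "(x\<^sup>2 + (A - 3*y\<^sup>2))\<^sup>2 \<ge> (x\<^sup>2)\<^sup>2 + (A - 3*y\<^sup>2)\<^sup>2" unfolding e by linarith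
      moreover have "(A - 3*y\<^sup>2)\<^sup>2 - 8*y^4 + 4*A*y\<^sup>2 = A\<^sup>2 - 2*A*y\<^sup>2 + y^4"
        by (simp add: power2_eq_square power4_eq_xxxx algebra_simps)
      moreover have "2*A*y\<^sup>2 \<le> y\<^sup>2/2"
      proof -
        have "A * y\<^sup>2 \<le> (1/4) * y\<^sup>2" by (rule mult_right_mono) (use A in auto)
        then show ?thesis by linarith
      qed
      moreover have "0 \<le> y^4" by simp
      moreover have "qq x y \<mu> = (x\<^sup>2 + (A - 3*y\<^sup>2))\<^sup>2 - 8*y^4 + 4*A*y\<^sup>2" by (rule q)
      ultimately have "qq x y \<mu> \<ge> (x\<^sup>2)\<^sup>2 + \<delta>\<^sup>2 - y\<^sup>2/2" using dd by linarith
      moreover have "(x\<^sup>2 - 0)\<^sup>2 - (8*y^4 + y\<^sup>2 - (1/4 - b)\<^sup>2) \<le> (x\<^sup>2)\<^sup>2 + \<delta>\<^sup>2 - y\<^sup>2/2"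
      proof -
        have "(x\<^sup>2 - 0)\<^sup>2 = (x\<^sup>2)\<^sup>2" by simp
        then show ?thesis unfolding \<delta>_def[symmetric] using \<open>0 \<le> y^4\<close> zero_le_power2[of y] by linarith
      qed
      ultimately show "qq x y \<mu> \<ge> (x\<^sup>2 - 0)\<^sup>2 - (8*y^4 + y\<^sup>2 - (1/4 - b)\<^sup>2)" by linarith
    qed
  next
    case False
    have "A\<^sup>2 \<le> A * (3*y\<^sup>2)" using False A by (simp add: power2_eq_square mult_left_mono)
    also have "\<dots> \<le> (1/4) * (3*y\<^sup>2)" using A by (intro mult_right_mono) auto
    finally have "\<delta>\<^sup>2 \<le> y\<^sup>2" using dd zero_le_power2[of y] by linarith
    moreover have "0 \<le> 4*A*y\<^sup>2" using A by simp
    ultimately show ?thesis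
      by (intro exI[of _ "3*y\<^sup>2 - A"] allI) (simp add: q \<delta>_def[symmetric] algebra_simps)
  qed
qed

lemma I1_bounds:
  fixes a b t y :: real
  assumes ab: "0 \<le> a" "a \<le> b" "b \<le> 1" and t: "t > 0" and y: "y > 0"
  shows "integral {a..b} (\<lambda>\<mu>. exp (t\<^sup>2 * (8*y^4 - 4*(1/4-\<mu>)*y\<^sup>2))) \<le> exp (t\<^sup>2 * (8*y^4 + 3*y\<^sup>2))"
    and "integral {a..b} (\<lambda>\<mu>. exp (t\<^sup>2 * (8*y^4 - 4*(1/4-\<mu>)*y\<^sup>2))) \<le> exp (t\<^sup>2 * (8*y^4 + 3*y\<^sup>2)) / (4*t\<^sup>2*y\<^sup>2)"
proof -
  define k where "k = 4*t\<^sup>2*y\<^sup>2"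
  have k: "k > 0" using t y by (simp add: k_def)
  have f: "exp (t\<^sup>2 * (8*y^4 - 4*(1/4-\<mu>)*y\<^sup>2)) = exp (t\<^sup>2*8*y^4) * exp (k * (\<mu> - 1/4))" for \<mu>
    unfolding k_def by (simp add: algebra_simps flip: exp_add)
  have le1: "exp (t\<^sup>2 * (8*y^4 - 4*(1/4-\<mu>)*y\<^sup>2)) \<le> exp (t\<^sup>2 * (8*y^4 + 3*y\<^sup>2))" if "\<mu> \<le> 1" for \<mu>
  proof -
    have m: "\<mu> * y\<^sup>2 \<le> 1 * y\<^sup>2" by (rule mult_right_mono) (use that in auto)
    have "- 4*(1/4-\<mu>)*y\<^sup>2 \<le> 3*y\<^sup>2" using m by (simp add: algebra_simps)
    then have "t\<^sup>2 * (- 4*(1/4-\<mu>)*y\<^sup>2) \<le> t\<^sup>2 * (3*y\<^sup>2)" by (intro mult_left_mono) auto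
    then show ?thesis by (simp add: algebra_simps)
  qed
  have "integral {a..b} (\<lambda>\<mu>. exp (t\<^sup>2 * (8*y^4 - 4*(1/4-\<mu>)*y\<^sup>2))) \<le> integral {a..b} (\<lambda>\<mu>. exp (t\<^sup>2 * (8*y^4 + 3*y\<^sup>2)))"
    using ab by (intro integral_le integrable_continuous_interval continuous_intros le1) auto
  also have "\<dots> = (b - a) * exp (t\<^sup>2 * (8*y^4 + 3*y\<^sup>2))" using ab by simp
  also have "\<dots> \<le> exp (t\<^sup>2 * (8*y^4 + 3*y\<^sup>2))" using ab by (intro mult_left_le_one_le) auto
  finally show "integral {a..b} (\<lambda>\<mu>. exp (t\<^sup>2 * (8*y^4 - 4*(1/4-\<mu>)*y\<^sup>2))) \<le> exp (t\<^sup>2 * (8*y^4 + 3*y\<^sup>2))" .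
  have "((\<lambda>\<mu>. exp (t\<^sup>2*8*y^4) * exp (k * (\<mu> - 1/4))) has_integral
        ((\<lambda>\<mu>. exp (t\<^sup>2*8*y^4) * exp (k * (\<mu> - 1/4)) / k) b - (\<lambda>\<mu>. exp (t\<^sup>2*8*y^4) * exp (k * (\<mu> - 1/4)) / k) a)) {a..b}"
  proof (rule fundamental_theorem_of_calculus[OF ab(2)])
    fix x assume "x \<in> {a..b}"
    have "((\<lambda>\<mu>. exp (t\<^sup>2*8*y^4) * exp (k * (\<mu> - 1/4)) / k) has_real_derivative
          exp (t\<^sup>2*8*y^4) * (exp (k * (x - 1/4)) * (k * 1)) / k) (at x within {a..b})"
      by (auto intro!: derivative_eq_intros)
    then show "((\<lambda>\<mu>. exp (t\<^sup>2*8*y^4) * exp (k * (\<mu> - 1/4)) / k) has_vector_derivative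
          exp (t\<^sup>2*8*y^4) * exp (k * (x - 1/4))) (at x within {a..b})"
      using k by (simp add: has_real_derivative_iff_has_vector_derivative)
  qed
  then have "integral {a..b} (\<lambda>\<mu>. exp (t\<^sup>2*8*y^4) * exp (k * (\<mu> - 1/4)))
      = exp (t\<^sup>2*8*y^4) * exp (k * (b - 1/4)) / k - exp (t\<^sup>2*8*y^4) * exp (k * (a - 1/4)) / k"
    by (intro integral_unique) simp
  then have "integral {a..b} (\<lambda>\<mu>. exp (t\<^sup>2 * (8*y^4 - 4*(1/4-\<mu>)*y\<^sup>2)))
      = exp (t\<^sup>2*8*y^4) * exp (k * (b - 1/4)) / k - exp (t\<^sup>2*8*y^4) * exp (k * (a - 1/4)) / k"
    by (simp only: f)
  also have "\<dots> \<le> exp (t\<^sup>2*8*y^4) * exp (k * (b - 1/4)) / k" using k by simp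
  also have "\<dots> \<le> exp (t\<^sup>2*8*y^4) * exp (t\<^sup>2 * (3*y\<^sup>2)) / k"
  proof -
    have "k * (b - 1/4) \<le> k * (3/4)" using k ab by (intro mult_left_mono) auto
    also have "\<dots> = t\<^sup>2 * (3*y\<^sup>2)" by (simp add: k_def)
    finally show ?thesis using k by (intro divide_right_mono mult_left_mono) auto
  qed
  also have "\<dots> = exp (t\<^sup>2 * (8*y^4 + 3*y\<^sup>2)) / (4*t\<^sup>2*y\<^sup>2)"
    by (simp add: k_def algebra_simps flip: exp_add)
  finally show "integral {a..b} (\<lambda>\<mu>. exp (t\<^sup>2 * (8*y^4 - 4*(1/4-\<mu>)*y\<^sup>2))) \<le> exp (t\<^sup>2 * (8*y^4 + 3*y\<^sup>2)) / (4*t\<^sup>2*y\<^sup>2)" .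
qed


lemma cube_pow: "0 < x \<Longrightarrow> (x powr (1/3)) ^ n = x powr (real n / 3)"
proof -
  assume x: "0 < x"
  have "(x powr (1/3)) ^ n = (x powr (1/3)) powr (real n)"
    using x by (simp add: powr_realpow)
  also have "\<dots> = x powr (real n / 3)" by (simp add: powr_powr)
  finally show ?thesis .
qed

lemma N1:
  fixes \<sigma> p \<rho> :: real
  assumes "\<sigma> \<ge> 1/6" "\<rho> \<le> p" "0 < \<rho>" "\<rho> < 2"
  shows "1 + 1 / (\<sigma>^4 * p) + 2 / (\<sigma> * p) \<le> 2620 / \<rho>\<^sup>2"
proof -
  have s0: "\<sigma> > 0" using assms by linarith
  have p0: "p > 0" using assms by linarith
  have "(1/6)^4 \<le> \<sigma>^4" using assms by (intro power_mono) auto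
  then have s4: "1 / \<sigma>^4 \<le> 1296" using s0 by (simp add: field_simps)
  have s1: "1 / \<sigma> \<le> 6" using assms s0 by (simp add: field_simps)
  have pr: "1 / p \<le> 1 / \<rho>" using assms by (intro divide_left_mono) auto
  have "1 / (\<sigma>^4 * p) = (1 / \<sigma>^4) * (1 / p)" by simp
  also have "\<dots> \<le> 1296 * (1 / \<rho>)" using s4 pr p0 s0 by (intro mult_mono) auto
  finally have a1: "1 / (\<sigma>^4 * p) \<le> 1296 * (1 / \<rho>)" .
  have "2 / (\<sigma> * p) = 2 * ((1 / \<sigma>) * (1 / p))" by simp
  also have "\<dots> \<le> 2 * (6 * (1 / \<rho>))" using s1 pr p0 s0 by (intro mult_left_mono mult_mono) auto
  finally have a2: "2 / (\<sigma> * p) \<le> 12 * (1 / \<rho>)" by simp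
  have r1: "1 / \<rho> \<le> 2 / \<rho>\<^sup>2" using assms by (simp add: field_simps power2_eq_square)
  have r0: "1 \<le> 4 / \<rho>\<^sup>2"
  proof -
    have "\<rho>\<^sup>2 \<le> 2\<^sup>2" using assms by (intro power_mono) auto
    then show ?thesis using assms by (simp add: field_simps)
  qed
  have "1 + 1 / (\<sigma>^4 * p) + 2 / (\<sigma> * p) \<le> 1 + 1308 * (1 / \<rho>)" using a1 a2 by linarith
  also have "\<dots> \<le> 4 / \<rho>\<^sup>2 + 1308 * (2 / \<rho>\<^sup>2)" using r0 r1 by linarith
  also have "\<dots> = 2620 / \<rho>\<^sup>2" by simp
  finally show ?thesis .
qed

lemma N2:
  fixes z t :: real
  assumes "z > 0" "t \<ge> 1/200"
  shows "(1 + z / t + 2 * z) * exp (- (2 * z\<^sup>2)) \<le> 203"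
proof -
  have t0: "t > 0" using assms by linarith
  have e1: "exp (- (2 * z\<^sup>2)) \<le> 1" by simp
  have e2: "exp (- (2 * z\<^sup>2)) \<le> 1 / (1 + 2 * z\<^sup>2)" by (rule exp_neg_le) simp
  have zz: "z / (1 + 2 * z\<^sup>2) \<le> 1"
  proof -
    have h: "(z - 1/2)\<^sup>2 = z\<^sup>2 - z + 1/4" by (simp add: power2_eq_square algebra_simps)
    have "z \<le> 1 + 2 * z\<^sup>2" using h zero_le_power2[of "z - 1/2"] zero_le_power2[of z] by linarith
    then show ?thesis by (simp add: field_simps add_pos_nonneg)
  qed
  have zt: "z / t \<le> 200 * z" using assms t0 by (simp add: field_simps)
  have "z * exp (- (2 * z\<^sup>2)) \<le> z * (1 / (1 + 2 * z\<^sup>2))" using e2 assms by (intro mult_left_mono) auto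
  also have "\<dots> \<le> 1" using zz by simp
  finally have ze: "z * exp (- (2 * z\<^sup>2)) \<le> 1" .
  have "(1 + z / t + 2 * z) * exp (- (2 * z\<^sup>2)) \<le> (1 + 200 * z + 2 * z) * exp (- (2 * z\<^sup>2))"
    using zt by (intro mult_right_mono) auto
  also have "\<dots> = exp (- (2 * z\<^sup>2)) + 202 * (z * exp (- (2 * z\<^sup>2)))" by (simp add: algebra_simps)
  also have "\<dots> \<le> 1 + 202 * 1" using e1 ze by linarith
  finally show ?thesis by simp
qed



lemma m23: fixes u :: real assumes u0: "u > 0"
  shows "u powr (-2/3) = 1 / (u powr (1/3))^2"
proof -
  have a: "(u powr (1/3))^2 = u powr (2/3)" using cube_pow[OF u0, of 2] by simp
  have b: "u powr (-2/3) = inverse (u powr (2/3))" using powr_minus[of u "2/3"] by simp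
  show ?thesis by (subst a, subst b, rule inverse_eq_divide)
qed

lemma main_bound:
  fixes a b r u t :: real
  assumes ab: "0 \<le> a" "a \<le> b" "b \<le> 1" and r: "0 < r" "r < 3" "r \<le> u" and t: "1/200 \<le> t"
  shows "norm (complex_of_real (1 / (2 * pi)) * integral UNIV (\<lambda>r'. h_t a b t (complex_of_real r') * (\<i> * complex_of_real r') * exp (\<i> * complex_of_real (r' * u))))
    \<le> 3000 * r powr (-2/3) * exp (- t\<^sup>2 * (delta_b b)\<^sup>2 - 7/32 * u powr (4/3) * t powr (-2/3) + 3/16 * u powr (2/3) * t powr (2/3))"
proof -
  have t0: "t > 0" using t by linarith
  have u0: "u > 0" using r by linarith
  define p where "p = u powr (1/3)"
  define \<sigma> where "\<sigma> = t powr (1/3)"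
  define \<rho> where "\<rho> = r powr (1/3)"
  have p0: "p > 0" "\<sigma> > 0" "\<rho> > 0" using t0 u0 r by (auto simp: p_def \<sigma>_def \<rho>_def)
  have "p^3 = u powr (real 3 / 3)" unfolding p_def by (rule cube_pow[OF u0])
  then have p3: "u = p^3" using u0 by simp
  have "\<sigma>^3 = t powr (real 3 / 3)" unfolding \<sigma>_def by (rule cube_pow[OF t0])
  then have s3: "t = \<sigma>^3" using t0 by simp
  have "\<rho>^3 = r powr (real 3 / 3)" unfolding \<rho>_def by (rule cube_pow[OF r(1)])
  then have r3: "r = \<rho>^3" using r(1) by simp
  have "p^4 = u powr (real 4 / 3)" unfolding p_def by (rule cube_pow[OF u0])
  then have up43: "u powr (4/3) = p^4" by simp
  have "p^2 = u powr (real 2 / 3)" unfolding p_def by (rule cube_pow[OF u0])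
  then have up23: "u powr (2/3) = p^2" by simp
  have "\<sigma>^2 = t powr (real 2 / 3)" unfolding \<sigma>_def by (rule cube_pow[OF t0])
  then have tp23: "t powr (2/3) = \<sigma>^2" by simp
  have tm23: "t powr (-2/3) = 1 / \<sigma>^2" unfolding \<sigma>_def by (rule m23[OF t0])
  have rm23: "r powr (-2/3) = 1 / \<rho>^2" unfolding \<rho>_def by (rule m23[OF r(1)])
  have rp: "\<rho> \<le> p" unfolding \<rho>_def p_def using r by (intro powr_mono2) auto
  have r2: "\<rho> < 2"
  proof (rule power_less_imp_less_base)
    show "\<rho> ^ 3 < 2 ^ 3" using r r3 by simp
  qed simp
  have s6: "\<sigma> \<ge> 1/6"
  proof (rule ccontr)
    assume "\<not> \<sigma> \<ge> 1/6"
    then have "\<sigma>^3 < (1/6)^3" using p0 by (intro power_strict_mono) auto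
    moreover have "(1/6::real)^3 = 1/216" by (simp add: power3_eq_cube)
    ultimately show False using t s3 by linarith
  qed
  define y where "y = p / (4 * \<sigma>\<^sup>2)"
  have y0: "y > 0" using p0 by (simp add: y_def)
  have yu: "y * u = p^4 / (4 * \<sigma>\<^sup>2)" unfolding y_def p3 using p0 by (simp add: field_simps power_def)
  have ty4: "t\<^sup>2 * y^4 = p^4 / (256 * \<sigma>\<^sup>2)" unfolding y_def s3 using p0 by (simp add: field_simps power_def)
  have ty2: "t\<^sup>2 * y\<^sup>2 = p\<^sup>2 * \<sigma>\<^sup>2 / 16" unfolding y_def s3 using p0 by (simp add: field_simps power_def)
  have ty: "t * y = \<sigma> * p / 4" unfolding y_def s3 using p0 by (simp add: field_simps power_def)
  have t2y: "t\<^sup>2 * y = \<sigma>^4 * p / 4" unfolding y_def s3 using p0 by (simp add: field_simps power_def)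
  define T where "T = - t\<^sup>2 * (delta_b b)\<^sup>2 - 7/32 * u powr (4/3) * t powr (-2/3) + 3/16 * u powr (2/3) * t powr (2/3)"
  have T: "T = - t\<^sup>2 * (delta_b b)\<^sup>2 - (y * u) + t\<^sup>2 * (8 * y^4 + 3 * y\<^sup>2)"
    unfolding T_def up43 tm23 up23 tp23 yu using ty4 ty2 by (simp add: algebra_simps)
  define W where "W = (1 + y) * pi / t + 2 * pi * y"
  have eqint: "(\<lambda>r'. h_t a b t (complex_of_real r') * (\<i> * complex_of_real r') * exp (\<i> * complex_of_real (r' * u)))
      = (\<lambda>r'. \<i> * Phi a b t u (complex_of_real r'))"
    by (auto simp: Phi_def fun_eq_iff mult_ac)
  have eqn: "norm (complex_of_real (1 / (2 * pi)) * integral UNIV (\<lambda>r'. h_t a b t (complex_of_real r') * (\<i> * complex_of_real r') * exp (\<i> * complex_of_real (r' * u))))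
     = 1 / (2 * pi) * norm (integral UNIV (\<lambda>x. Phi a b t u (complex_of_real x)))"
    unfolding eqint by (simp add: norm_mult norm_divide)
  have sp: "sqrt pi * sqrt pi = pi" by simp
  have spi: "sqrt pi / (2 * pi) \<le> 1"
  proof -
    have "1 \<le> sqrt pi" using pi_gt3 by (simp add: real_le_rsqrt)
    then have "sqrt pi * 1 \<le> sqrt pi * sqrt pi" by (intro mult_left_mono) auto
    then have "sqrt pi \<le> 2 * pi" using sp pi_gt_zero by linarith
    then show ?thesis using pi_gt_zero by (simp add: divide_le_eq)
  qed
  show ?thesis
  proof (cases "b < 1/4")
    case False
    have db: "delta_b b = 0" using False by (simp add: delta_b_def)
    define I where "I = integral {a..b} (\<lambda>\<mu>. exp (t\<^sup>2 * (8*y^4 - 4*(1/4-\<mu>)*y\<^sup>2)))"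
    have B: "norm (integral UNIV (\<lambda>x. Phi a b t u (complex_of_real x))) \<le> t / sqrt pi * exp (- (y * u)) * (W * I)"
    proof (rule limit_bound[OF ab t0 less_imp_le[OF y0] less_imp_le[OF u0]])
      fix s :: real assume s: "s \<ge> 0"
      show "norm (integral {-s..s} (\<lambda>x. Phi a b t u (complex_of_real x + \<i> * complex_of_real y))) \<le> t / sqrt pi * exp (- (y * u)) * (W * I)"
        unfolding Phi_def W_def I_def
        by (rule shifted_bound[OF ab t0 less_imp_le[OF y0] s]) (intro continuous_intros, rule Dex1)
    qed
    have I1: "I \<le> exp (t\<^sup>2 * (8*y^4 + 3*y\<^sup>2))" and I2: "I \<le> exp (t\<^sup>2 * (8*y^4 + 3*y\<^sup>2)) / (4*t\<^sup>2*y\<^sup>2)"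
      unfolding I_def using I1_bounds[OF ab t0 y0] by auto
    define X where "X = exp (t\<^sup>2 * (8*y^4 + 3*y\<^sup>2))"
    have X0: "X > 0" by (simp add: X_def)
    have I0: "I \<ge> 0" unfolding I_def using ab
      by (intro integral_nonneg integrable_continuous_interval continuous_intros) auto
    have tW: "t / sqrt pi * W = sqrt pi * (1 + y) + 2 * sqrt pi * (t * y)"
      unfolding W_def using t0 sp by (simp add: field_simps)
    have "t / sqrt pi * W * I = sqrt pi * I + sqrt pi * (y * I) + 2 * sqrt pi * (t * y * I)"
      unfolding tW by (simp add: algebra_simps)
    also have "\<dots> \<le> sqrt pi * X + sqrt pi * (y * (X / (4*t\<^sup>2*y\<^sup>2))) + 2 * sqrt pi * (t * y * (X / (4*t\<^sup>2*y\<^sup>2)))"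
      using I1 I2 y0 t0 unfolding X_def by (intro add_mono mult_left_mono) auto
    also have "\<dots> = sqrt pi * X * (1 + 1 / (4 * (t\<^sup>2 * y)) + 2 / (4 * (t * y)))"
      using y0 t0 by (simp add: field_simps power2_eq_square)
    also have "\<dots> = sqrt pi * X * (1 + 1 / (\<sigma>^4 * p) + 2 / (\<sigma> * p))"
      unfolding t2y ty by simp
    also have "\<dots> \<le> sqrt pi * X * (2620 / \<rho>\<^sup>2)"
      using N1[OF s6 rp p0(3) r2] X0 by (intro mult_left_mono) auto
    finally have K: "t / sqrt pi * W * I \<le> sqrt pi * X * (2620 / \<rho>\<^sup>2)" .
    have "norm (integral UNIV (\<lambda>x. Phi a b t u (complex_of_real x))) \<le> exp (- (y * u)) * (t / sqrt pi * W * I)"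
      using B by (simp add: mult_ac)
    also have "\<dots> \<le> exp (- (y * u)) * (sqrt pi * X * (2620 / \<rho>\<^sup>2))"
      using K by (intro mult_left_mono) auto
    also have ee: "exp (- (y * u)) * X = exp T" unfolding T db X_def by (simp add: mult_exp_exp)
    have "exp (- (y * u)) * (sqrt pi * X * (2620 / \<rho>\<^sup>2)) = sqrt pi * (2620 / \<rho>\<^sup>2) * (exp (- (y * u)) * X)"
      by (simp only: mult_ac)
    finally have K2: "norm (integral UNIV (\<lambda>x. Phi a b t u (complex_of_real x))) \<le> sqrt pi * (2620 / \<rho>\<^sup>2) * exp T"
      unfolding ee .
    have "1 / (2 * pi) * norm (integral UNIV (\<lambda>x. Phi a b t u (complex_of_real x))) \<le> 1 / (2 * pi) * (sqrt pi * (2620 / \<rho>\<^sup>2) * exp T)"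
      using K2 by (intro mult_left_mono) auto
    also have "\<dots> = (sqrt pi / (2 * pi)) * (2620 / \<rho>\<^sup>2 * exp T)" by simp
    also have "\<dots> \<le> 1 * (2620 / \<rho>\<^sup>2 * exp T)"
      using spi p0 by (intro mult_right_mono) auto
    also have "\<dots> \<le> 3000 * (1 / \<rho>\<^sup>2) * exp T"
      using p0 by (simp add: field_simps)
    finally show ?thesis unfolding eqn rm23 T_def by simp
  next
    case True
    define \<delta> where "\<delta> = 1/4 - b"
    have db: "delta_b b = \<delta>" using True by (simp add: delta_b_def \<delta>_def)
    define Rc where "Rc = 8*y^4 + y\<^sup>2 - \<delta>\<^sup>2"
    define I where "I = integral {a..b} (\<lambda>\<mu>::real. exp (t\<^sup>2 * Rc))"
    have B: "norm (integral UNIV (\<lambda>x. Phi a b t u (complex_of_real x))) \<le> t / sqrt pi * exp (- (y * u)) * (W * I)"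
    proof (rule limit_bound[OF ab t0 less_imp_le[OF y0] less_imp_le[OF u0]])
      fix s :: real assume s: "s \<ge> 0"
      show "norm (integral {-s..s} (\<lambda>x. Phi a b t u (complex_of_real x + \<i> * complex_of_real y))) \<le> t / sqrt pi * exp (- (y * u)) * (W * I)"
        unfolding Phi_def W_def I_def
        by (rule shifted_bound[OF ab t0 less_imp_le[OF y0] s, where R="\<lambda>_. Rc"])
           (use True ab in \<open>auto intro!: continuous_intros Dex2 simp: Rc_def \<delta>_def\<close>)
    qed
    have I1: "I \<le> exp (t\<^sup>2 * Rc)"
    proof -
      have "I = (b - a) * exp (t\<^sup>2 * Rc)" using ab by (simp add: I_def)
      also have "\<dots> \<le> exp (t\<^sup>2 * Rc)" using ab by (intro mult_left_le_one_le) auto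
      finally show ?thesis .
    qed
    define z where "z = t * y"
    have z0: "z > 0" using t0 y0 by (simp add: z_def)
    have yz: "y = z / t" using t0 by (simp add: z_def)
    have tW: "t / sqrt pi * W = sqrt pi * (1 + z / t + 2 * z)"
      unfolding W_def z_def using t0 sp by (simp add: field_simps)
    have ex: "- (y * u) + t\<^sup>2 * Rc = T - 2 * z\<^sup>2"
      unfolding T db Rc_def z_def by (simp add: algebra_simps power2_eq_square)
    have "norm (integral UNIV (\<lambda>x. Phi a b t u (complex_of_real x))) \<le> exp (- (y * u)) * (t / sqrt pi * W) * I"
      using B by (simp add: mult_ac)
    also have "\<dots> \<le> exp (- (y * u)) * (t / sqrt pi * W) * exp (t\<^sup>2 * Rc)"
      using I1 t0 y0 unfolding W_def by (intro mult_left_mono) auto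
    also have "\<dots> = sqrt pi * ((1 + z / t + 2 * z) * exp (- (2 * z\<^sup>2))) * exp T"
      unfolding tW using ex by (simp add: mult_ac flip: exp_add)
    also have "\<dots> \<le> sqrt pi * 203 * exp T"
      using N2[OF z0 t] by (intro mult_right_mono mult_left_mono) auto
    finally have K2: "norm (integral UNIV (\<lambda>x. Phi a b t u (complex_of_real x))) \<le> sqrt pi * 203 * exp T" .
    have "1 / (2 * pi) * norm (integral UNIV (\<lambda>x. Phi a b t u (complex_of_real x))) \<le> 1 / (2 * pi) * (sqrt pi * 203 * exp T)"
      using K2 by (intro mult_left_mono) auto
    also have "\<dots> = (sqrt pi / (2 * pi)) * (203 * exp T)" by simp
    also have "\<dots> \<le> 1 * (203 * exp T)"
      using spi by (intro mult_right_mono) auto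
    also have "\<dots> \<le> 3000 * (1 / \<rho>\<^sup>2) * exp T"
    proof -
      have "\<rho>\<^sup>2 \<le> 2\<^sup>2" using p0 r2 by (intro power_mono) auto
      then have h203: "203 \<le> 3000 * (1 / \<rho>\<^sup>2)" using p0 by (simp add: field_simps)
      show ?thesis using mult_right_mono[OF h203, of "exp T"] by simp
    qed
    finally show ?thesis unfolding eqn rm23 T_def by simp
  qed
qed


theorem lemma3p5:
  shows "\<exists>C::real. \<forall>a b r u t::real.
    0 \<le> a \<and> a \<le> b \<and> b \<le> 1 \<and> 0 < r \<and> r < 3 \<and> u \<ge> r \<and> t \<ge> 1/200 \<longrightarrow>
      (g_t a b t) differentiable (at u) \<and>
      norm (vector_derivative (g_t a b t) (at u)) \<le>
        C * r powr (-2/3) *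
          exp (- t\<^sup>2 * (delta_b b)\<^sup>2 - 7/32 * u powr (4/3) * t powr (-2/3)
               + 3/16 * u powr (2/3) * t powr (2/3))"
proof (intro exI[of _ 3000] allI impI)
  fix a b r u t :: real
  assume H: "0 \<le> a \<and> a \<le> b \<and> b \<le> 1 \<and> 0 < r \<and> r < 3 \<and> u \<ge> r \<and> t \<ge> 1/200"
  then have ab: "0 \<le> a" "a \<le> b" "b \<le> 1" and rr: "0 < r" "r < 3" "r \<le> u" and tt: "1/200 \<le> t" by auto
  have t0: "0 < t" using tt by linarith
  have d: "(g_t a b t has_vector_derivative
     (complex_of_real (1 / (2 * pi)) * integral UNIV (\<lambda>r'. h_t a b t (complex_of_real r') * (\<i> * complex_of_real r') * exp (\<i> * complex_of_real (r' * u))))) (at u)"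
    by (rule g_deriv[OF ab t0])
  show "(g_t a b t) differentiable (at u) \<and>
      norm (vector_derivative (g_t a b t) (at u)) \<le>
        3000 * r powr (-2/3) *
          exp (- t\<^sup>2 * (delta_b b)\<^sup>2 - 7/32 * u powr (4/3) * t powr (-2/3)
               + 3/16 * u powr (2/3) * t powr (2/3))"
    using differentiableI_vector[OF d] vector_derivative_at[OF d] main_bound[OF ab rr tt] by simp
qed

end
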